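(* Let $(\mathsf K,\mathsf D)$ be a differential ring and $u\in\mathsf K$. For every integer $m\ge0$, in the Ore algebra $\mathsf K\langle\mathsf D\rangle$, $$(\mathsf D+u)^m=\sum_{j=0}^m\binom mj P_{m-j}(u)\,\mathsf D^j.$$
   Context: $(\mathsf K,\mathsf D)$: unital associative (possibly noncommutative) ring with derivation $\mathsf D$. $\mathsf K\langle\mathsf D\rangle$: Ore algebra with coefficients on the left and $\mathsf D a=a\mathsf D+\mathsf D(a)$. The noncommutative Bell polynomials are $P_0(u)=1$, $P_{m+1}(u)=\mathsf D(P_m(u))+u\,P_m(u)$. *)

theory Defs
  imports Main "HOL-Library.Function_Algebras"
begin

definition is_derivation :: "('a::ring_1 \<Rightarrow> 'a) \<Rightarrow> bool" where
  "is_derivation Dr \<longleftrightarrow> (\<forall>a b. Dr (a + b) = Dr a + Dr b) \<and> (\<forall>a b. Dr (a * b) = Dr a * b + a * Dr b)"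

text \<open>Elements of the Ore algebra K<D> are finitely supported coefficient functions
  p :: nat => 'a, representing sum_j (p j) D^j (coefficients on the left).\<close>
definition ore_monom :: "'a::zero \<Rightarrow> nat \<Rightarrow> (nat \<Rightarrow> 'a)" where
  "ore_monom c n = (\<lambda>k. if k = n then c else 0)"

definition ore_one :: "nat \<Rightarrow> 'a::ring_1" where
  "ore_one = ore_monom 1 0"

text \<open>Left multiplication by D, using the commutation rule D a = a D + D(a).\<close>
definition ore_Dmult :: "('a::ring_1 \<Rightarrow> 'a) \<Rightarrow> (nat \<Rightarrow> 'a) \<Rightarrow> (nat \<Rightarrow> 'a)" where
  "ore_Dmult Dr q = (\<lambda>j. (if j = 0 then 0 else q (j - 1)) + Dr (q j))"

definition ore_mult :: "('a::ring_1 \<Rightarrow> 'a) \<Rightarrow> (nat \<Rightarrow> 'a) \<Rightarrow> (nat \<Rightarrow> 'a) \<Rightarrow> (nat \<Rightarrow> 'a)" where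
  "ore_mult Dr p q = (\<Sum>i\<in>{i. p i \<noteq> 0}. (\<lambda>j. p i * ((ore_Dmult Dr ^^ i) q) j))"

primrec ore_pow :: "('a::ring_1 \<Rightarrow> 'a) \<Rightarrow> (nat \<Rightarrow> 'a) \<Rightarrow> nat \<Rightarrow> (nat \<Rightarrow> 'a)" where
  "ore_pow Dr p 0 = ore_one"
| "ore_pow Dr p (Suc n) = ore_mult Dr p (ore_pow Dr p n)"

primrec bellP :: "('a::ring_1 \<Rightarrow> 'a) \<Rightarrow> nat \<Rightarrow> 'a \<Rightarrow> 'a" where
  "bellP Dr 0 u = 1"
| "bellP Dr (Suc m) u = Dr (bellP Dr m u) + u * bellP Dr m u"

end

theory Submission
  imports Defs
begin

lemma fsum_apply: "(sum f S) x = (\<Sum>i\<in>S. f i x)"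
  by (induction S rule: infinite_finite_induct) auto

lemma der_zero: assumes "is_derivation Dr" shows "Dr 0 = 0"
proof -
  have "Dr (0 + 0) = Dr 0 + Dr 0" using assms unfolding is_derivation_def by blast
  then show ?thesis by simp
qed

lemma der_of_nat: assumes "is_derivation Dr" shows "Dr (of_nat n * x) = of_nat n * Dr x"
proof (induction n)
  case 0 then show ?case using der_zero[OF assms] by simp
next
  case (Suc n)
  have "Dr (of_nat (Suc n) * x) = Dr (x + of_nat n * x)" by (simp add: algebra_simps)
  also have "\<dots> = Dr x + Dr (of_nat n * x)" using assms unfolding is_derivation_def by blast
  finally show ?case using Suc by (simp add: algebra_simps)
qed

lemma der_add: assumes "is_derivation Dr" shows "Dr (a + b) = Dr a + Dr b"
  using assms unfolding is_derivation_def by blast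

lemma mult_step:
  fixes u :: "'a::ring_1"
  shows "ore_mult Dr (ore_monom 1 1 + ore_monom u 0) q j =
     u * q j + ((if j = 0 then 0 else q (j - 1)) + Dr (q j))"
proof -
  let ?p = "ore_monom 1 1 + ore_monom u 0"
  show ?thesis
  proof (cases "u = 0")
    case True
    have "{i. ?p i \<noteq> 0} = {1}" using True by (auto simp: ore_monom_def)
    then show ?thesis using True
      by (simp add: ore_mult_def fsum_apply ore_monom_def ore_Dmult_def)
  next
    case False
    have "{i. ?p i \<noteq> 0} = {0,1}" using False by (auto simp: ore_monom_def)
    then show ?thesis
      by (simp add: ore_mult_def fsum_apply ore_monom_def ore_Dmult_def algebra_simps)
  qed
qed

lemma main_pt:
  fixes u :: "'a::ring_1"
  assumes D: "is_derivation Dr"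
  shows "ore_pow Dr (ore_monom 1 1 + ore_monom u 0) m j = of_nat (m choose j) * bellP Dr (m - j) u"
proof (induction m arbitrary: j)
  case 0
  then show ?case by (simp add: ore_one_def ore_monom_def binomial_eq_0)
next
  case (Suc m)
  have uc: "u * (of_nat c * x) = of_nat c * (u * x)" for c x
    by (metis mult.assoc mult_of_nat_commute)
  have st: "ore_pow Dr (ore_monom 1 1 + ore_monom u 0) (Suc m) j' =
     u * ore_pow Dr (ore_monom 1 1 + ore_monom u 0) m j' + ((if j' = 0 then 0 else ore_pow Dr (ore_monom 1 1 + ore_monom u 0) m (j' - 1)) + Dr (ore_pow Dr (ore_monom 1 1 + ore_monom u 0) m j'))" for j'
    by (simp only: ore_pow.simps mult_step)
  show ?case
  proof (cases j)
    case 0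
    then show ?thesis unfolding st Suc.IH
      by (simp add:  der_of_nat[OF D] uc algebra_simps)
  next
    case (Suc i)
    show ?thesis
    proof (cases "i < m")
      case True
      then have e: "m - i = Suc (m - Suc i)" by simp
      show ?thesis unfolding st Suc.IH using True \<open>j = Suc i\<close>
        by (simp add: der_of_nat[OF D] uc e algebra_simps)
    next
      case False
      then have "m choose Suc i = 0" by simp
      then show ?thesis unfolding st Suc.IH using False \<open>j = Suc i\<close>
        by (simp add: binomial_eq_0 der_of_nat[OF D] der_zero[OF D] uc algebra_simps)
    qed
  qed
qed

theorem mainTheorem4:
  fixes Dr :: "'a::ring_1 \<Rightarrow> 'a" and u :: 'a and m :: nat
  assumes "is_derivation Dr"
  shows "ore_pow Dr (ore_monom 1 1 + ore_monom u 0) m =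
         (\<Sum>j\<le>m. ore_monom (of_nat (m choose j) * bellP Dr (m - j) u) j)"
proof
  fix k
  have "(\<Sum>j\<le>m. ore_monom (of_nat (m choose j) * bellP Dr (m - j) u) j) k
      = (\<Sum>j\<le>m. if k = j then of_nat (m choose j) * bellP Dr (m - j) u else 0)"
    by (simp add: fsum_apply ore_monom_def eq_commute)
  also have "\<dots> = of_nat (m choose k) * bellP Dr (m - k) u"
    by (simp add: sum.delta binomial_eq_0)
  finally show "ore_pow Dr (ore_monom 1 1 + ore_monom u 0) m k =
     (\<Sum>j\<le>m. ore_monom (of_nat (m choose j) * bellP Dr (m - j) u) j) k"
    using main_pt[OF assms] by simp
qed

end
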